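(* For every $0\le k\le n$ and every $\pi\in S_n$, $$\chi_{\beta_{H_n^k}}(\pi)=|C_\pi|\,(n-|\mathrm{supp}(\pi)|)_k=(n-|\mathrm{supp}(\pi)|)_k\,\chi_{Conj}(\pi),$$ where $\chi_{Conj}$ is the character of the conjugacy representation of $S_n$.
   Context: Permutations are composed as functions, and $\pi\in S_n$ is identified with the permutation matrix whose $(i,j)$ entry is $1$ iff $i=\pi(j)$. For $A\in GL_n(\mathbb{Z}_2)$ let $\eta(A)$ (resp. $\theta(A)$) be the partition obtained by sorting the row sums (resp. column sums) of $A$, computed as integers, in weakly decreasing order. For $0\le k\le n$, $H_n^k=\{A\in GL_n(\mathbb{Z}_2)\mid \eta(A)=(n,n-1,\dots,n-k+1,1^{n-k}),\ \theta(A)=((k+1)^{n-k},k,k-1,\dots,1)\}$. $\beta_{H_n^k}$ is the complex permutation representation of $S_n$ on the space with basis $H_n^k$ given by $\pi\circ A=\pi A\pi^{-1}$, with character $\chi_{\beta_{H_n^k}}$. $C_\pi$ is the centralizer of $\pi$ in $S_n$, $\mathrm{supp}(\pi)$ is the set of points moved by $\pi$, and $(m)_k=m(m-1)\cdots(m-k+1)$ is the falling factorial ($(m)_0=1$, and $(m)_k=0$ if $0\le m<k$). The conjugacy representation is the permutation representation of $S_n$ acting on itself by conjugation. *)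

theory Defs
  imports "HOL-Library.Z2" "HOL-Combinatorics.Permutations" "Jordan_Normal_Form.Matrix" Complex_Main
begin

definition Sym :: "nat \<Rightarrow> (nat \<Rightarrow> nat) set" where
  "Sym n = {p. p permutes {..<n}}"

definition perm_mat :: "nat \<Rightarrow> (nat \<Rightarrow> nat) \<Rightarrow> bit mat" where
  "perm_mat n p = mat n n (\<lambda>(i, j). if i = p j then 1 else 0)"

definition conj_act :: "nat \<Rightarrow> (nat \<Rightarrow> nat) \<Rightarrow> bit mat \<Rightarrow> bit mat" where
  "conj_act n p A = perm_mat n p * A * perm_mat n (inv_into UNIV p)"

definition GL2 :: "nat \<Rightarrow> bit mat set" where
  "GL2 n = {A \<in> carrier_mat n n. invertible_mat A}"

definition row_sum :: "bit mat \<Rightarrow> nat \<Rightarrow> nat" where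
  "row_sum A i = (\<Sum>j<dim_col A. if A $$ (i, j) = 1 then 1 else 0)"

definition col_sum :: "bit mat \<Rightarrow> nat \<Rightarrow> nat" where
  "col_sum A j = (\<Sum>i<dim_row A. if A $$ (i, j) = 1 then 1 else 0)"

text \<open>Partitions as weakly decreasing lists.\<close>
definition eta :: "bit mat \<Rightarrow> nat list" where
  "eta A = rev (sort (map (row_sum A) [0..<dim_row A]))"

definition theta :: "bit mat \<Rightarrow> nat list" where
  "theta A = rev (sort (map (col_sum A) [0..<dim_col A]))"

definition H :: "nat \<Rightarrow> nat \<Rightarrow> bit mat set" where
  "H n k = {A \<in> GL2 n.
     eta A = map (\<lambda>i. n - i) [0..<k] @ replicate (n - k) 1 \<and>
     theta A = replicate (n - k) (k + 1) @ map (\<lambda>i. k - i) [0..<k]}"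

text \<open>Character of the permutation representation on basis H n k: trace of the
  permutation matrix of pi, i.e. the sum of its diagonal coefficients.\<close>
definition chi_beta :: "nat \<Rightarrow> nat \<Rightarrow> (nat \<Rightarrow> nat) \<Rightarrow> complex" where
  "chi_beta n k p = (\<Sum>A\<in>H n k. if conj_act n p A = A then 1 else 0)"

text \<open>Character of the conjugacy representation (S_n acting on itself by conjugation).\<close>
definition chi_conj :: "nat \<Rightarrow> (nat \<Rightarrow> nat) \<Rightarrow> complex" where
  "chi_conj n p = (\<Sum>s\<in>Sym n. if p \<circ> s \<circ> inv_into UNIV p = s then 1 else 0)"

definition centralizer :: "nat \<Rightarrow> (nat \<Rightarrow> nat) \<Rightarrow> (nat \<Rightarrow> nat) set" where
  "centralizer n p = {s \<in> Sym n. s \<circ> p = p \<circ> s}"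

definition supp :: "(nat \<Rightarrow> nat) \<Rightarrow> nat set" where
  "supp p = {i. p i \<noteq> i}"

text \<open>Falling factorial (m)_k; equals 0 when m < k.\<close>
definition falling :: "nat \<Rightarrow> nat \<Rightarrow> nat" where
  "falling m k = (\<Prod>i<k. m - i)"

end

theory Submission
  imports Defs "Jordan_Normal_Form.Determinant"
begin


definition Inj :: "nat \<Rightarrow> nat \<Rightarrow> nat list set" where
  "Inj n k = {xs. distinct xs \<and> length xs = k \<and> set xs \<subseteq> {..<n}}"

definition PP :: "(nat \<Rightarrow> nat) \<Rightarrow> nat list \<Rightarrow> nat \<Rightarrow> nat \<Rightarrow> bool" where
  "PP s c i j = (if s i \<in> set c then (j \<notin> set c \<or> (\<exists>a b. a + b < length c \<and> c!a = j \<and> c!b = s i)) else j = s i)"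

definition Psi :: "nat \<Rightarrow> (nat \<Rightarrow> nat) \<Rightarrow> nat list \<Rightarrow> bit mat" where
  "Psi n s c = mat n n (\<lambda>(i,j). if PP s c i j then 1 else 0)"

abbreviation iv :: "(nat \<Rightarrow> nat) \<Rightarrow> nat \<Rightarrow> nat" where "iv f \<equiv> inv_into UNIV f"

lemma sum_if_card: "(\<Sum>j\<in>S. if P j then 1 else 0) = (card {j\<in>S. P j} :: nat)" if "finite S"
  using that by (simp add: sum.If_cases Int_def)

lemma rev_sort_eq: fixes xs ys :: "nat list"
  assumes "mset xs = mset ys" "sorted (rev ys)" shows "rev (sort xs) = ys"
proof -
  have "sort xs = rev ys" by (rule properties_for_sort) (use assms in auto)
  thus ?thesis by simp
qed

lemma mset_rev_sort: "mset (rev (sort xs)) = mset xs" by simp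

lemma count_map_upt: "count (mset (map f [0..<n])) v = card {j. j < n \<and> f j = v}"
proof -
  have "mset (map f [0..<n]) = image_mset f (mset_set {..<n})"
    by (metis atLeast_upt mset_map mset_set_set distinct_upt)
  thus ?thesis by (simp add: count_image_mset_eq_card_vimage)
qed

lemma mset_map_upt: "mset (map f [0..<n]) = image_mset f (mset_set {..<n})"
  by (metis atLeast_upt mset_map mset_set_set distinct_upt)

lemma mset_map_split:
  assumes c: "c \<in> Inj n k" and fa: "\<And>t. t < k \<Longrightarrow> f (c!t) = a t"
    and fb: "\<And>j. j < n \<Longrightarrow> j \<notin> set c \<Longrightarrow> f j = b"
  shows "mset (map f [0..<n]) = mset (map a [0..<k]) + replicate_mset (n-k) b"
proof -
  have d: "distinct c" "length c = k" "set c \<subseteq> {..<n}" using c by (auto simp: Inj_def)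
  have "mset_set {..<n} = mset_set (set c) + mset_set ({..<n} - set c)"
    using d by (metis Diff_partition Diff_disjoint finite_Diff finite_lessThan mset_set_Union rev_finite_subset)
  moreover have "mset_set (set c) = mset c" using d by (simp add: mset_set_set)
  moreover have "image_mset f (mset_set ({..<n} - set c)) = replicate_mset (n-k) b"
  proof -
    have "image_mset f (mset_set ({..<n} - set c)) = image_mset (\<lambda>_. b) (mset_set ({..<n} - set c))"
      by (intro image_mset_cong) (use fb in auto)
    also have "\<dots> = replicate_mset (card ({..<n} - set c)) b" by (simp add: image_mset_const_eq)
    also have "card ({..<n} - set c) = n - k" using d by (simp add: card_Diff_subset distinct_card)
    finally show ?thesis .
  qed
  ultimately have "image_mset f (mset_set {..<n}) = mset (map f c) + replicate_mset (n-k) b"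
    by (simp only: image_mset_union mset_map)
  have "map f c = map a [0..<k]" using d fa by (intro nth_equalityI) auto
  have "mset (map f [0..<n]) = image_mset f (mset_set {..<n})" by (rule mset_map_upt)
  also have "\<dots> = mset (map f c) + replicate_mset (n-k) b" by fact
  also have "mset (map f c) = mset (map a [0..<k])" using \<open>map f c = map a [0..<k]\<close> by simp
  finally show ?thesis .
qed

lemma mset_map_perm:
  assumes "s permutes {..<n}"
  shows "mset (map f [0..<n]) = mset (map (f \<circ> iv s) [0..<n])"
proof -
  have "mset (map f [0..<n]) = image_mset f (mset_set {..<n})" by (rule mset_map_upt)
  also have "\<dots> = image_mset (f \<circ> iv s) (image_mset s (mset_set {..<n}))"
    by (simp add: image_mset.compositionality o_def permutes_inverses(2)[OF assms])
  also have "\<dots> = image_mset (f \<circ> iv s) (mset_set (s ` {..<n}))"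
    using image_mset_mset_set[of s "{..<n}"] permutes_inj_on[OF assms] by simp
  also have "\<dots> = image_mset (f \<circ> iv s) (mset_set {..<n})"
    using permutes_image[OF assms] by simp
  also have "\<dots> = mset (map (f \<circ> iv s) [0..<n])" by (rule mset_map_upt[symmetric])
  finally show ?thesis .
qed

lemma falling_eq: "k \<le> m \<Longrightarrow> falling m k = \<Prod>{m - k + 1..m}"
proof (induction k)
  case 0 thus ?case by (simp add: falling_def)
next
  case (Suc k)
  have "falling m (Suc k) = falling m k * (m - k)" by (simp add: falling_def)
  also have "\<dots> = \<Prod>{m - k + 1..m} * (m - k)" using Suc by simp
  also have "\<dots> = \<Prod>{m - Suc k + 1..m}"
  proof -
    have "{m - Suc k + 1..m} = insert (m - k) {m - k + 1..m}" using Suc.prems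
      by (metis Suc_diff_Suc Suc_eq_plus1 Suc_le_lessD atLeastAtMost_insertL diff_le_self)
    moreover have "m - k \<notin> {m - k + 1..m}" by simp
    ultimately show ?thesis using prod.insert[OF finite_atLeastAtMost, of "m - k" "m - k + 1" m "\<lambda>x. x"]
      by (metis mult.commute)
  qed
  finally show ?case .
qed

lemma falling_zero: "m < k \<Longrightarrow> falling m k = 0"
  unfolding falling_def by (rule prod_zero) (auto intro!: bexI[of _ m])

lemma card_distinct_lists: "finite A \<Longrightarrow> card {xs. length xs = k \<and> distinct xs \<and> set xs \<subseteq> A} = falling (card A) k"
proof (cases "k \<le> card A")
  case True
  assume f: "finite A"
  have "card {xs. length xs = k \<and> distinct xs \<and> set xs \<subseteq> A} = \<Prod>{card A - k + 1..card A}"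
    by (rule card_lists_distinct_length_eq[OF f True])
  also have "\<dots> = falling (card A) k" by (rule falling_eq[OF True, symmetric])
  finally show ?thesis .
next
  case False
  assume f: "finite A"
  have "{xs. length xs = k \<and> distinct xs \<and> set xs \<subseteq> A} = {}"
  proof (rule ccontr)
    assume "{xs. length xs = k \<and> distinct xs \<and> set xs \<subseteq> A} \<noteq> {}"
    then obtain xs where "length xs = k" "distinct xs" "set xs \<subseteq> A" by blast
    hence "k \<le> card A" using card_mono[OF f] distinct_card by metis
    thus False using False by simp
  qed
  moreover have "falling (card A) k = 0" using False by (intro falling_zero) simp
  ultimately show ?thesis by (simp only: card.empty)
qed



lemma perm_mat_carrier[simp]: "perm_mat n p \<in> carrier_mat n n"
  by (simp add: perm_mat_def)

lemma conj_act_carrier: "A \<in> carrier_mat n n \<Longrightarrow> conj_act n p A \<in> carrier_mat n n"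
  unfolding conj_act_def by (metis mult_carrier_mat perm_mat_carrier)

lemma conj_act_entry:
  assumes A: "A \<in> carrier_mat n n" and p: "p permutes {..<n}" and i: "i < n" and j: "j < n"
  shows "conj_act n p A $$ (i,j) = A $$ (iv p i, iv p j)"
proof -
  have ip: "iv p x < n" if "x < n" for x using p that
    by (metis lessThan_iff permutes_inv permutes_in_image)
  have L: "(perm_mat n p * A) $$ (i,b) = A $$ (iv p i, b)" if b: "b < n" for b
  proof -
    have "(perm_mat n p * A) $$ (i,b) = (\<Sum>a\<in>{0..<n}. (if i = p a then 1 else 0) * A $$ (a,b))"
      using A i b by (simp add: perm_mat_def scalar_prod_def)
    also have "\<dots> = (\<Sum>a\<in>{0..<n}. if a = iv p i then A $$ (a,b) else 0)"
    proof (rule sum.cong[OF refl])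
      fix a
      have "(i = p a) = (a = iv p i)" using permutes_inv_eq[OF p, of i a] by auto
      thus "(if i = p a then 1 else 0) * A $$ (a,b) = (if a = iv p i then A $$ (a,b) else 0)" by simp
    qed
    also have "\<dots> = A $$ (iv p i, b)" using ip[OF i] by simp
    finally show ?thesis .
  qed
  have "conj_act n p A $$ (i,j) = (\<Sum>b\<in>{0..<n}. (perm_mat n p * A) $$ (i,b) * (if b = iv p j then 1 else 0))"
    unfolding conj_act_def using A i j by (simp add: perm_mat_def scalar_prod_def)
  also have "\<dots> = (\<Sum>b\<in>{0..<n}. if b = iv p j then (perm_mat n p * A) $$ (i,b) else 0)"
    by (rule sum.cong) auto
  also have "\<dots> = (perm_mat n p * A) $$ (i, iv p j)" using ip[OF j] by simp
  also have "\<dots> = A $$ (iv p i, iv p j)" using L ip[OF j] by simp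
  finally show ?thesis .
qed



lemma Psi_carrier[simp]: "Psi n s c \<in> carrier_mat n n" by (simp add: Psi_def)
lemma Psi_dims[simp]: "dim_row (Psi n s c) = n" "dim_col (Psi n s c) = n" by (simp_all add: Psi_def)

lemma Psi_entry: "i < n \<Longrightarrow> j < n \<Longrightarrow> Psi n s c $$ (i,j) = (if PP s c i j then 1 else 0)"
  by (simp add: Psi_def)

lemma PP_equiv_aux:
  assumes "inj p"
  shows "PP (p \<circ> s \<circ> iv p) (map p c) (p x) (p y) = PP s c x y"
proof -
  have e1: "(p \<circ> s \<circ> iv p) (p x) = p (s x)" using assms by (simp add: inv_f_f)
  have e2: "p z \<in> set (map p c) \<longleftrightarrow> z \<in> set c" for z using assms by (auto simp: inj_eq)
  have e3: "a < length c \<Longrightarrow> (map p c ! a = p z) = (c ! a = z)" for a z using assms by (simp add: inj_eq)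
  have e4: "(\<exists>a b. a + b < length c \<and> map p c ! a = p y \<and> map p c ! b = p z) =
     (\<exists>a b. a + b < length c \<and> c ! a = y \<and> c ! b = z)" for z
  proof -
    have "a + b < length c \<Longrightarrow> (map p c ! a = p y \<and> map p c ! b = p z) = (c ! a = y \<and> c ! b = z)" for a b
      using e3[of a y] e3[of b z] by simp
    thus ?thesis by blast
  qed
  have e5: "(p y = p z) = (y = z)" for z using assms by (simp add: inj_eq)
  show ?thesis unfolding PP_def e1 e2 e4 e5 length_map ..
qed

lemma PP_equiv:
  assumes "p permutes {..<n}"
  shows "PP (p \<circ> s \<circ> iv p) (map p c) i j = PP s c (iv p i) (iv p j)"
proof -
  have "inj p" using assms permutes_inj by blast
  moreover have "i = p (iv p i)" "j = p (iv p j)" using assms by (simp_all add: permutes_inverses)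
  ultimately show ?thesis using PP_equiv_aux by metis
qed

lemma conj_Psi:
  assumes "p permutes {..<n}"
  shows "conj_act n p (Psi n s c) = Psi n (p \<circ> s \<circ> iv p) (map p c)"
proof (rule eq_matI)
  have C: "conj_act n p (Psi n s c) \<in> carrier_mat n n" by (rule conj_act_carrier) simp
  show "dim_row (conj_act n p (Psi n s c)) = dim_row (Psi n (p \<circ> s \<circ> iv p) (map p c))"
    using C by simp
  show "dim_col (conj_act n p (Psi n s c)) = dim_col (Psi n (p \<circ> s \<circ> iv p) (map p c))"
    using C by simp
  fix i j assume "i < dim_row (Psi n (p \<circ> s \<circ> iv p) (map p c))" "j < dim_col (Psi n (p \<circ> s \<circ> iv p) (map p c))"
  hence ij: "i < n" "j < n" by auto
  have ip: "iv p x < n" if "x < n" for x using assms that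
    by (metis lessThan_iff permutes_inv permutes_in_image)
  show "conj_act n p (Psi n s c) $$ (i,j) = Psi n (p \<circ> s \<circ> iv p) (map p c) $$ (i,j)"
    using conj_act_entry[OF Psi_carrier assms ij] Psi_entry ij ip PP_equiv[OF assms] by simp
qed

lemma Sym_conj: "p \<in> Sym n \<Longrightarrow> s \<in> Sym n \<Longrightarrow> p \<circ> s \<circ> iv p \<in> Sym n"
  unfolding Sym_def by (auto intro: permutes_compose permutes_inv)

lemma Inj_map: assumes "p \<in> Sym n" "c \<in> Inj n k" shows "map p c \<in> Inj n k"
proof -
  have p: "p permutes {..<n}" using assms by (simp add: Sym_def)
  have c: "distinct c" "length c = k" "set c \<subseteq> {..<n}" using assms by (auto simp: Inj_def)
  have "distinct (map p c)" using c p by (simp add: distinct_map inj_on_subset[OF permutes_inj[OF p]])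
  moreover have "set (map p c) \<subseteq> {..<n}" using c permutes_in_image[OF p] by auto
  ultimately show ?thesis using c by (simp add: Inj_def)
qed



lemma sum_if_card': "(\<Sum>j<(n::nat). if P j then 1 else 0) = (card {j. j < n \<and> P j} :: nat)"
proof -
  have "(\<Sum>j<n. if P j then 1 else 0) = card {j\<in>{..<n}. P j}" by (rule sum_if_card, rule finite_lessThan)
  also have "{j\<in>{..<n}. P j} = {j. j < n \<and> P j}" by auto
  finally show ?thesis .
qed

lemma row_sum_Psi: "i < n \<Longrightarrow> row_sum (Psi n s c) i = card {j. j < n \<and> PP s c i j}"
proof -
  assume i: "i < n"
  have "row_sum (Psi n s c) i = (\<Sum>j<n. if PP s c i j then 1 else 0)"
    unfolding row_sum_def using i by (intro sum.cong) (auto simp: Psi_entry)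
  thus ?thesis by (simp only: sum_if_card')
qed

lemma col_sum_Psi: "j < n \<Longrightarrow> col_sum (Psi n s c) j = card {i. i < n \<and> PP s c i j}"
proof -
  assume j: "j < n"
  have "col_sum (Psi n s c) j = (\<Sum>i<n. if PP s c i j then 1 else 0)"
    unfolding col_sum_def using j by (intro sum.cong) (auto simp: Psi_entry)
  thus ?thesis by (simp only: sum_if_card')
qed

context
  fixes n k :: nat and s :: "nat \<Rightarrow> nat" and c :: "nat list"
  assumes s: "s permutes {..<n}" and c: "c \<in> Inj n k"
begin

lemma cD0: "distinct c" "length c = k" "set c \<subseteq> {..<n}"
  using c by (auto simp: Inj_def)

lemma cD: "distinct c" "length c = k" "set c \<subseteq> {..<n}" "k \<le> n"
proof -
  show "distinct c" "length c = k" "set c \<subseteq> {..<n}" by (rule cD0)+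
  have "card (set c) \<le> card {..<n}" by (rule card_mono) (simp_all add: cD0)
  thus "k \<le> n" using cD0 distinct_card by fastforce
qed

lemma c_lt: "t < k \<Longrightarrow> c ! t < n" using cD nth_mem by blast

lemma c_inj: "a < k \<Longrightarrow> b < k \<Longrightarrow> (c ! a = c ! b) = (a = b)"
  using cD by (simp add: nth_eq_iff_index_eq)

lemma s_lt: "i < n \<Longrightarrow> s i < n" using s by (metis lessThan_iff permutes_in_image)
lemma iv_lt: "i < n \<Longrightarrow> iv s i < n" using s by (metis lessThan_iff permutes_inv permutes_in_image)
lemma s_iv[simp]: "s (iv s x) = x" using s by (simp add: permutes_inverses)
lemma iv_s[simp]: "iv s (s x) = x" using s by (simp add: permutes_inverses)

lemma PP_big: "t < k \<Longrightarrow> s i = c ! t \<Longrightarrow> PP s c i j = (j \<notin> set c \<or> (\<exists>a. a + t < k \<and> c ! a = j))"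
proof -
  assume t: "t < k" "s i = c ! t"
  have m: "c ! t \<in> set c" using t cD by (metis nth_mem)
  have "(\<exists>a b. a + b < length c \<and> c ! a = j \<and> c ! b = c ! t) = (\<exists>a. a + t < k \<and> c ! a = j)"
  proof
    assume "\<exists>a b. a + b < length c \<and> c ! a = j \<and> c ! b = c ! t"
    then obtain a b where ab: "a + b < k" "c ! a = j" "c ! b = c ! t" using cD by auto
    have "b = t" using ab(1,3) t(1) c_inj by (metis add_lessD1 add.commute)
    thus "\<exists>a. a + t < k \<and> c ! a = j" using ab by blast
  next
    assume "\<exists>a. a + t < k \<and> c ! a = j"
    thus "\<exists>a b. a + b < length c \<and> c ! a = j \<and> c ! b = c ! t" using cD by auto
  qed
  thus ?thesis unfolding PP_def using t(2) m by simp
qed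

lemma PP_unit: "s i \<notin> set c \<Longrightarrow> PP s c i j = (j = s i)"
  unfolding PP_def by simp

lemma col_sum_out: assumes j: "j < n" "j \<notin> set c" shows "col_sum (Psi n s c) j = k + 1"
proof -
  have "{i. i < n \<and> PP s c i j} = insert (iv s j) (iv s ` set c)"
  proof (intro Set.set_eqI iffI)
    fix i assume "i \<in> {i. i < n \<and> PP s c i j}"
    hence i: "i < n" "PP s c i j" by auto
    show "i \<in> insert (iv s j) (iv s ` set c)"
    proof (cases "s i \<in> set c")
      case True
      have "i = iv s (s i)" by simp
      thus ?thesis using True by blast
    next
      case False
      hence "j = s i" using i PP_unit by blast
      hence "i = iv s j" by simp
      thus ?thesis by blast
    qed
  next
    fix i assume "i \<in> insert (iv s j) (iv s ` set c)"
    then consider "i = iv s j" | x where "x \<in> set c" "i = iv s x" by blast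
    thus "i \<in> {i. i < n \<and> PP s c i j}"
    proof cases
      case 1
      have "s i = j" using 1 by simp
      hence "PP s c i j" using PP_unit j(2) by blast
      thus ?thesis using 1 iv_lt j(1) by blast
    next
      case 2
      have "s i = x" using 2 by simp
      hence "PP s c i j" unfolding PP_def using 2 j(2) by simp
      moreover have "x < n" using 2 cD by blast
      ultimately show ?thesis using 2 iv_lt by blast
    qed
  qed
  moreover have "iv s j \<notin> iv s ` set c"
  proof
    assume "iv s j \<in> iv s ` set c"
    then obtain x where "x \<in> set c" "iv s j = iv s x" by blast
    hence "j = x" by (metis s_iv)
    thus False using j(2) \<open>x \<in> set c\<close> by blast
  qed
  moreover have "card (iv s ` set c) = k"
  proof -
    have "inj_on (iv s) (set c)" by (rule inj_onI) (metis s_iv)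
    hence "card (iv s ` set c) = card (set c)" by (rule card_image)
    thus ?thesis using cD distinct_card by metis
  qed
  ultimately have "card {i. i < n \<and> PP s c i j} = Suc k"
    by (metis card_insert_disjoint finite_imageI finite_set)
  thus ?thesis using col_sum_Psi[OF j(1)] by simp
qed

lemma col_sum_in: assumes a: "a < k" shows "col_sum (Psi n s c) (c ! a) = k - a"
proof -
  have ca: "c ! a \<in> set c" using a cD by (metis nth_mem)
  have "{i. i < n \<and> PP s c i (c ! a)} = (\<lambda>t. iv s (c ! t)) ` {..<k - a}"
  proof (intro Set.set_eqI iffI)
    fix i assume "i \<in> {i. i < n \<and> PP s c i (c ! a)}"
    hence i: "i < n" "PP s c i (c ! a)" by auto
    have si: "s i \<in> set c"
    proof (rule ccontr)
      assume "s i \<notin> set c"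
      hence "c ! a = s i" using PP_unit i(2) by blast
      thus False using ca \<open>s i \<notin> set c\<close> by simp
    qed
    then obtain t where t: "t < k" "s i = c ! t" using cD by (metis in_set_conv_nth)
    have "\<exists>a'. a' + t < k \<and> c ! a' = c ! a" using PP_big[OF t, of "c ! a"] i(2) ca by blast
    then obtain a' where a': "a' + t < k" "c ! a' = c ! a" by blast
    have "a' = a" using a' a c_inj by (metis add_lessD1)
    hence "t \<in> {..<k - a}" using a'(1) by simp
    moreover have "i = iv s (c ! t)" using t(2) by (metis iv_s)
    ultimately show "i \<in> (\<lambda>t. iv s (c ! t)) ` {..<k - a}" by blast
  next
    fix i assume "i \<in> (\<lambda>t. iv s (c ! t)) ` {..<k - a}"
    then obtain t where t: "t < k - a" "i = iv s (c ! t)" by blast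
    have tk: "t < k" using t(1) by simp
    have si: "s i = c ! t" using t(2) by simp
    have "a + t < k" using t(1) by simp
    hence "PP s c i (c ! a)" using PP_big[OF tk si, of "c ! a"] by blast
    moreover have "i < n" using t(2) iv_lt c_lt[OF tk] by simp
    ultimately show "i \<in> {i. i < n \<and> PP s c i (c ! a)}" by blast
  qed
  moreover have "inj_on (\<lambda>t. iv s (c ! t)) {..<k - a}"
  proof (rule inj_onI)
    fix x y assume "x \<in> {..<k - a}" "y \<in> {..<k - a}" "iv s (c ! x) = iv s (c ! y)"
    hence "c ! x = c ! y" "x < k" "y < k" by (metis s_iv, simp_all)
    thus "x = y" using c_inj by blast
  qed
  ultimately have "card {i. i < n \<and> PP s c i (c ! a)} = k - a" by (simp add: card_image)
  thus ?thesis using col_sum_Psi[OF c_lt[OF a]] by simp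
qed

lemma row_sum_unit: assumes i: "i < n" "s i \<notin> set c" shows "row_sum (Psi n s c) i = 1"
proof -
  have "{j. j < n \<and> PP s c i j} = {s i}" using i PP_unit s_lt by auto
  thus ?thesis using row_sum_Psi[OF i(1)] by simp
qed

lemma row_set_big: assumes t: "t < k" "s i = c ! t"
  shows "{j. j < n \<and> PP s c i j} = ({..<n} - set c) \<union> (\<lambda>a. c ! a) ` {..<k - t}"
  using PP_big[OF t] cD c_lt by (auto simp: less_diff_conv)

lemma row_sum_big: assumes t: "t < k" "s i = c ! t" "i < n" shows "row_sum (Psi n s c) i = n - t"
proof -
  have d: "({..<n} - set c) \<inter> (\<lambda>a. c ! a) ` {..<k - t} = {}" using cD by auto
  have c1: "card ({..<n} - set c) = n - k" using cD by (simp add: card_Diff_subset distinct_card)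
  have c2: "card ((\<lambda>a. c ! a) ` {..<k - t}) = k - t"
    by (rule trans[OF card_image]) (auto intro!: inj_onI simp: c_inj)
  have "card (({..<n} - set c) \<union> (\<lambda>a. c ! a) ` {..<k - t}) = n - k + (k - t)"
    using card_Un_disjoint[OF _ _ d] c1 c2 by simp
  thus ?thesis using row_sum_Psi[OF t(3)] row_set_big[OF t(1,2)] t(1) cD by simp
qed

end


lemma sorted_rev_map_upt: "(\<And>i j. i \<le> j \<Longrightarrow> j < k \<Longrightarrow> f j \<le> (f i :: nat)) \<Longrightarrow> sorted (rev (map f [0..<k]))"
proof (induction k)
  case 0 thus ?case by simp
next
  case (Suc k)
  have "sorted (rev (map f [0..<k]))" using Suc by simp
  moreover have "\<forall>y\<in>set (map f [0..<k]). f k \<le> y" using Suc.prems by auto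
  ultimately show ?case by simp
qed

lemma sorted_Te: "k \<le> n \<Longrightarrow> sorted (rev (map (\<lambda>i. n - i) [0..<k] @ replicate (n - k) (1::nat)))"
  by (auto simp: sorted_append intro!: sorted_rev_map_upt)

lemma sorted_Tt: "sorted (rev (replicate (n - k) (k + 1) @ map (\<lambda>i. k - i) [0..<k]))"
  by (auto simp: sorted_append intro!: sorted_rev_map_upt)

context
  fixes n k :: nat and s :: "nat \<Rightarrow> nat" and c :: "nat list"
  assumes s: "s permutes {..<n}" and c: "c \<in> Inj n k"
begin

lemma eta_Psi: "eta (Psi n s c) = map (\<lambda>i. n - i) [0..<k] @ replicate (n - k) 1"
proof -
  let ?f = "row_sum (Psi n s c)"
  have "mset (map ?f [0..<n]) = mset (map (?f \<circ> iv s) [0..<n])" by (rule mset_map_perm[OF s])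
  also have "\<dots> = mset (map (\<lambda>i. n - i) [0..<k]) + replicate_mset (n - k) 1"
  proof (rule mset_map_split[OF c])
    fix t assume t: "t < k"
    show "(?f \<circ> iv s) (c ! t) = n - t"
      using row_sum_big[OF s c t, of "iv s (c ! t)"] iv_lt[OF s c] c_lt[OF s c t] s_iv[OF s c] by simp
  next
    fix j assume j: "j < n" "j \<notin> set c"
    show "(?f \<circ> iv s) j = 1"
      using row_sum_unit[OF s c, of "iv s j"] iv_lt[OF s c j(1)] j s_iv[OF s c] by simp
  qed
  also have "\<dots> = mset (map (\<lambda>i. n - i) [0..<k] @ replicate (n - k) 1)" by simp
  finally show ?thesis unfolding eta_def
    using rev_sort_eq sorted_Te cD(4)[OF s c] by simp
qed

lemma theta_Psi: "theta (Psi n s c) = replicate (n - k) (k + 1) @ map (\<lambda>i. k - i) [0..<k]"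
proof -
  let ?f = "col_sum (Psi n s c)"
  have "mset (map ?f [0..<n]) = mset (map (\<lambda>i. k - i) [0..<k]) + replicate_mset (n - k) (k + 1)"
  proof (rule mset_map_split[OF c])
    fix t assume t: "t < k"
    show "?f (c ! t) = k - t" by (rule col_sum_in[OF s c t])
  next
    fix j assume j: "j < n" "j \<notin> set c"
    show "?f j = k + 1" by (rule col_sum_out[OF s c j])
  qed
  also have "\<dots> = mset (replicate (n - k) (k + 1) @ map (\<lambda>i. k - i) [0..<k])" by simp
  finally show ?thesis unfolding theta_def
    using rev_sort_eq sorted_Tt by simp
qed

end


lemma invertible_of_det:
  assumes A: "(A :: 'a :: field mat) \<in> carrier_mat n n" and d: "det A \<noteq> 0"
  shows "invertible_mat A"
proof -
  have "A \<in> Units (ring_mat TYPE('a) n ())" by (rule det_non_zero_imp_unit[OF A d])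
  then obtain B where B: "B \<in> carrier_mat n n" "B * A = 1\<^sub>m n" "A * B = 1\<^sub>m n"
    unfolding Units_def ring_mat_def by auto
  show ?thesis unfolding invertible_mat_def inverts_mat_def using A B by auto
qed

context
  fixes n k :: nat and s :: "nat \<Rightarrow> nat" and c :: "nat list"
  assumes s: "s permutes {..<n}" and c: "c \<in> Inj n k"
begin

lemma Psi_mult_vec:
  assumes v: "v \<in> carrier_vec n" and i: "i < n"
  shows "(Psi n s c *\<^sub>v v) $ i = (\<Sum>j\<in>{j. j < n \<and> PP s c i j}. v $ j)"
proof -
  have "(Psi n s c *\<^sub>v v) $ i = (\<Sum>j\<in>{0..<n}. (if PP s c i j then 1 else 0) * v $ j)"
    using v i by (simp add: scalar_prod_def Psi_entry)
  also have "\<dots> = (\<Sum>j\<in>{0..<n}. if PP s c i j then v $ j else 0)"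
    by (rule sum.cong) simp_all
  also have "\<dots> = (\<Sum>j\<in>{j\<in>{0..<n}. PP s c i j}. v $ j)"
    by (rule sum.inter_filter[symmetric]) simp
  also have "{j\<in>{0..<n}. PP s c i j} = {j. j < n \<and> PP s c i j}" by auto
  finally show ?thesis .
qed

lemma Psi_det: "det (Psi n s c) \<noteq> 0"
proof
  assume "det (Psi n s c) = 0"
  then obtain v where v: "v \<in> carrier_vec n" "v \<noteq> 0\<^sub>v n" "Psi n s c *\<^sub>v v = 0\<^sub>v n"
    using det_0_iff_vec_prod_zero_field[OF Psi_carrier] by blast
  have E: "(\<Sum>j\<in>{j. j < n \<and> PP s c i j}. v $ j) = 0" if i: "i < n" for i
    using Psi_mult_vec[OF v(1) i] v(3) i by simp
  have Z1: "v $ j = 0" if j: "j < n" "j \<notin> set c" for j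
  proof -
    have "{j'. j' < n \<and> PP s c (iv s j) j'} = {j}"
      using PP_unit[OF s c, of "iv s j"] s_iv[OF s c] j by auto
    thus ?thesis using E[OF iv_lt[OF s c j(1)]] by simp
  qed
  have Z2: "(\<Sum>a<k - t. v $ (c ! a)) = 0" if t: "t < k" for t
  proof -
    let ?i = "iv s (c ! t)"
    have si: "s ?i = c ! t" using s_iv[OF s c] by simp
    have S: "{j. j < n \<and> PP s c ?i j} = ({..<n} - set c) \<union> (\<lambda>a. c ! a) ` {..<k - t}"
      by (rule row_set_big[OF s c t si])
    have d: "({..<n} - set c) \<inter> (\<lambda>a. c ! a) ` {..<k - t} = {}" using cD[OF s c] by auto
    have "(\<Sum>j\<in>({..<n} - set c) \<union> (\<lambda>a. c ! a) ` {..<k - t}. v $ j) =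
          (\<Sum>j\<in>{..<n} - set c. v $ j) + (\<Sum>j\<in>(\<lambda>a. c ! a) ` {..<k - t}. v $ j)"
      by (rule sum.union_disjoint[OF _ _ d]) simp_all
    also have "(\<Sum>j\<in>{..<n} - set c. v $ j) = 0" using Z1 by (intro sum.neutral) auto
    also have "(\<Sum>j\<in>(\<lambda>a. c ! a) ` {..<k - t}. v $ j) = (\<Sum>a<k - t. v $ (c ! a))"
      by (rule sum.reindex_cong[where l = "\<lambda>a. c ! a"]) (auto intro!: inj_onI simp: c_inj[OF s c])
    finally show ?thesis using E[OF iv_lt[OF s c c_lt[OF s c t]]] S by simp
  qed
  have Z3: "v $ (c ! a) = 0" if a: "a < k" for a
  proof -
    have "(\<Sum>b<Suc a. v $ (c ! b)) = 0" using Z2[of "k - Suc a"] a by simp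
    moreover have "(\<Sum>b<a. v $ (c ! b)) = 0"
    proof (cases a)
      case 0 thus ?thesis by simp
    next
      case (Suc a') thus ?thesis using Z2[of "k - a"] a by simp
    qed
    ultimately show ?thesis by simp
  qed
  have "v = 0\<^sub>v n"
  proof (rule eq_vecI)
    show "dim_vec v = dim_vec (0\<^sub>v n)" using v(1) by simp
    fix j assume "j < dim_vec (0\<^sub>v n)"
    hence j: "j < n" by simp
    show "v $ j = 0\<^sub>v n $ j"
    proof (cases "j \<in> set c")
      case True
      then obtain a where "a < k" "j = c ! a" using cD[OF s c] by (metis in_set_conv_nth)
      thus ?thesis using Z3 j by simp
    next
      case False thus ?thesis using Z1 j by simp
    qed
  qed
  thus False using v(2) by simp
qed

lemma Psi_in_H: "Psi n s c \<in> H n k"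
  unfolding H_def GL2_def
  using Psi_carrier invertible_of_det[OF Psi_carrier Psi_det] eta_Psi[OF s c] theta_Psi[OF s c] by simp

end


lemma bit_if_eq: "((if P then 1 else 0) = (if Q then 1 else (0::bit))) = (P = Q)"
  by auto

lemma PP_half_le:
  assumes s: "s permutes {..<n}" and s': "s' permutes {..<n}" and c: "c \<in> Inj n k"
    and imp: "\<And>j. j < n \<Longrightarrow> PP s c i j \<Longrightarrow> PP s' c i j"
    and t: "t < k" "s i = c ! t" and t': "t' < k" "s' i = c ! t'"
  shows "t' \<le> t"
proof -
  let ?j = "c ! (k - 1 - t)"
  have jk: "k - 1 - t < k" using t by simp
  have "k - 1 - t + t < k" using t by simp
  hence "PP s c i ?j" using PP_big[OF s c t, of ?j] by blast
  hence "PP s' c i ?j" using imp c_lt[OF s c jk] by blast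
  hence "?j \<notin> set c \<or> (\<exists>a. a + t' < k \<and> c ! a = ?j)" using PP_big[OF s' c t'] by blast
  moreover have "?j \<in> set c" using jk cD[OF s c] by (metis nth_mem)
  ultimately obtain a where a: "a + t' < k" "c ! a = ?j" by blast
  have "a = k - 1 - t" using a c_inj[OF s c] jk by (metis add_lessD1)
  thus ?thesis using a(1) t by simp
qed

lemma PP_half_in:
  assumes s: "s permutes {..<n}" and s': "s' permutes {..<n}" and c: "c \<in> Inj n k"
    and imp: "\<And>j. j < n \<Longrightarrow> PP s c i j \<Longrightarrow> PP s' c i j"
    and t: "t < k" "s i = c ! t"
  shows "s' i \<in> set c"
proof (rule ccontr)
  assume nin: "s' i \<notin> set c"
  have k0: "0 < k" using t by simp
  have "0 + t < k" using t by simp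
  hence "PP s c i (c ! 0)" using PP_big[OF s c t, of "c ! 0"] by blast
  hence "PP s' c i (c ! 0)" using imp c_lt[OF s c k0] by blast
  hence "c ! 0 = s' i" using PP_unit[OF s' c nin] by blast
  moreover have "c ! 0 \<in> set c" using k0 cD[OF s c] by (metis nth_mem)
  ultimately show False using nin by simp
qed

lemma Psi_inj:
  assumes s: "s permutes {..<n}" and s': "s' permutes {..<n}" and c: "c \<in> Inj n k" and c': "c' \<in> Inj n k"
    and eq: "Psi n s c = Psi n s' c'"
  shows "s = s' \<and> c = c'"
proof -
  have cc: "c = c'"
  proof (rule nth_equalityI)
    show "length c = length c'" using cD[OF s c] cD[OF s' c'] by simp
    fix a assume "a < length c"
    hence a: "a < k" using cD[OF s c] by simp
    have cs: "col_sum (Psi n s' c') (c ! a) = k - a" using col_sum_in[OF s c a] eq by simp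
    have "c ! a \<in> set c'"
    proof (rule ccontr)
      assume "c ! a \<notin> set c'"
      hence "col_sum (Psi n s' c') (c ! a) = k + 1" using col_sum_out[OF s' c' c_lt[OF s c a]] by blast
      thus False using cs by simp
    qed
    then obtain b where b: "b < k" "c ! a = c' ! b" using cD[OF s' c'] by (metis in_set_conv_nth)
    have "k - b = k - a" using col_sum_in[OF s' c' b(1)] cs b(2) by simp
    hence "a = b" using a b(1) by simp
    thus "c ! a = c' ! a" using b by simp
  qed
  have ss: "s i = s' i" for i
  proof (cases "i < n")
    case False
    thus ?thesis using permutes_not_in[OF s] permutes_not_in[OF s'] by simp
  next
    case True
    have eqv: "PP s c i j = PP s' c i j" if j: "j < n" for j
    proof -
      have "Psi n s c $$ (i,j) = Psi n s' c $$ (i,j)" using eq cc by simp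
      thus ?thesis using Psi_entry[OF True j] bit_if_eq by metis
    qed
    have i1: "\<And>j. j < n \<Longrightarrow> PP s c i j \<Longrightarrow> PP s' c i j" using eqv by blast
    have i2: "\<And>j. j < n \<Longrightarrow> PP s' c i j \<Longrightarrow> PP s c i j" using eqv by blast
    show ?thesis
    proof (cases "s i \<in> set c")
      case True
      then obtain t where t: "t < k" "s i = c ! t" using cD[OF s c] by (metis in_set_conv_nth)
      have "s' i \<in> set c" by (rule PP_half_in[OF s s' c i1 t])
      then obtain t' where t': "t' < k" "s' i = c ! t'" using cD[OF s c] by (metis in_set_conv_nth)
      have "t' \<le> t" by (rule PP_half_le[OF s s' c i1 t t'])
      moreover have "t \<le> t'" by (rule PP_half_le[OF s' s c i2 t' t])
      ultimately show ?thesis using t t' by simp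
    next
      case False
      have "s' i \<notin> set c"
      proof
        assume "s' i \<in> set c"
        then obtain t' where t': "t' < k" "s' i = c ! t'" using cD[OF s c] by (metis in_set_conv_nth)
        have "s i \<in> set c" by (rule PP_half_in[OF s' s c i2 t'])
        thus False using False by simp
      qed
      have "PP s c i (s i)" using PP_unit[OF s c False] by simp
      hence "PP s' c i (s i)" using i1 s_lt[OF s c True] by blast
      thus ?thesis using PP_unit[OF s' c \<open>s' i \<notin> set c\<close>] by simp
    qed
  qed
  show ?thesis using cc ss by auto
qed



lemma card_filter_sum: "finite A \<Longrightarrow> card {x\<in>A. P x} = (\<Sum>x\<in>A. if P x then 1 else 0)"
  by (simp add: sum.If_cases Int_def)

lemma staircase_le:
  fixes B :: "nat \<Rightarrow> nat \<Rightarrow> bool"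
  assumes R: "\<And>t. t < k \<Longrightarrow> card {s. s < k \<and> B t s} = k - t"
    and C: "\<And>s. s < k \<Longrightarrow> card {t. t < k \<and> B t s} = k - s"
    and t0: "t0 < k" and s0: "s0 < k" and B0: "B t0 s0"
  shows "s0 + t0 < k"
proof (rule ccontr)
  assume "\<not> s0 + t0 < k"
  define m where "m = k - t0"
  have ms0: "m \<le> s0" using \<open>\<not> s0 + t0 < k\<close> m_def by simp
  define X where "X t = card {s\<in>{m..<k}. B t s}" for t
  have N1: "(\<Sum>t<k. X t) = (\<Sum>s\<in>{m..<k}. card {t\<in>{..<k}. B t s})"
  proof -
    have "(\<Sum>t<k. X t) = (\<Sum>t<k. \<Sum>s\<in>{m..<k}. if B t s then 1 else 0)"
      unfolding X_def by (rule sum.cong[OF refl], rule card_filter_sum, simp)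
    also have "\<dots> = (\<Sum>s\<in>{m..<k}. \<Sum>t<k. if B t s then 1 else 0)" by (rule sum.swap)
    also have "\<dots> = (\<Sum>s\<in>{m..<k}. card {t\<in>{..<k}. B t s})"
      by (rule sum.cong[OF refl], rule card_filter_sum[symmetric], simp)
    finally show ?thesis .
  qed
  also have "\<dots> = (\<Sum>s\<in>{m..<k}. k - s)"
  proof (rule sum.cong[OF refl])
    fix s assume "s \<in> {m..<k}"
    hence "s < k" by simp
    have "{t\<in>{..<k}. B t s} = {t. t < k \<and> B t s}" by auto
    thus "card {t\<in>{..<k}. B t s} = k - s" using C[OF \<open>s < k\<close>] by simp
  qed
  also have "\<dots> = (\<Sum>u\<in>{0..<t0}. t0 - u)"
  proof -
    have "k = t0 + m" using m_def t0 by simp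
    hence "(\<Sum>s\<in>{m..<k}. k - s) = (\<Sum>s\<in>{0 + m..<t0 + m}. k - s)" by simp
    also have "\<dots> = (\<Sum>u\<in>{0..<t0}. k - (u + m))" by (rule sum.shift_bounds_nat_ivl)
    also have "\<dots> = (\<Sum>u\<in>{0..<t0}. t0 - u)" using \<open>k = t0 + m\<close> by simp
    finally show ?thesis .
  qed
  finally have N: "(\<Sum>t<k. X t) = (\<Sum>u\<in>{0..<t0}. t0 - u)" .
  have Xlow: "t0 - t \<le> X t" if t: "t < t0" for t
  proof -
    have "{s. s < k \<and> B t s} \<subseteq> {s. s < m} \<union> {s\<in>{m..<k}. B t s}" by auto
    hence "card {s. s < k \<and> B t s} \<le> card ({s. s < m} \<union> {s\<in>{m..<k}. B t s})"
      by (rule card_mono[rotated]) simp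
    also have "\<dots> \<le> card {s. s < m} + card {s\<in>{m..<k}. B t s}" by (rule card_Un_le)
    finally have "k - t \<le> m + X t" using R[of t] t t0 unfolding X_def by simp
    thus ?thesis using m_def t t0 by simp
  qed
  have X0: "1 \<le> X t0"
  proof -
    have "s0 \<in> {s\<in>{m..<k}. B t0 s}" using ms0 s0 B0 by simp
    hence "{s\<in>{m..<k}. B t0 s} \<noteq> {}" by blast
    thus ?thesis unfolding X_def by (simp add: Suc_le_eq card_gt_0_iff)
  qed
  have "(\<Sum>u\<in>{0..<t0}. t0 - u) \<le> (\<Sum>t<t0. X t)"
    unfolding atLeast0LessThan by (rule sum_mono) (use Xlow in auto)
  hence "(\<Sum>u\<in>{0..<t0}. t0 - u) + 1 \<le> (\<Sum>t<t0. X t) + X t0"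
    using X0 by linarith
  also have "\<dots> = (\<Sum>t<Suc t0. X t)" by simp
  also have "\<dots> \<le> (\<Sum>t<k. X t)" using t0 by (intro sum_mono2) auto
  finally show False using N by simp
qed

lemma staircase:
  fixes B :: "nat \<Rightarrow> nat \<Rightarrow> bool"
  assumes R: "\<And>t. t < k \<Longrightarrow> card {s. s < k \<and> B t s} = k - t"
    and C: "\<And>s. s < k \<Longrightarrow> card {t. t < k \<and> B t s} = k - s"
    and t: "t < k" and s: "s < k"
  shows "B t s = (s + t < k)"
proof
  assume "B t s" thus "s + t < k" using staircase_le[OF R C t s] by blast
next
  assume st: "s + t < k"
  have sub: "{s. s < k \<and> B t s} \<subseteq> {s. s < k - t}"
  proof
    fix x assume "x \<in> {s. s < k \<and> B t s}"
    hence "x < k" "B t x" by auto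
    hence "x + t < k" using staircase_le[OF R C t] by blast
    thus "x \<in> {s. s < k - t}" by simp
  qed
  have "card {s. s < k \<and> B t s} = card {s. s < k - t}" using R[OF t] by simp
  hence "{s. s < k \<and> B t s} = {s. s < k - t}"
    by (intro card_subset_eq[OF _ sub]) simp_all
  moreover have "s \<in> {s. s < k - t}" using st by simp
  ultimately show "B t s" by blast
qed



lemma bit_cases01: "(x::bit) = 0 \<or> x = 1" by (cases x) auto

lemma count_Te: "count (mset (map (\<lambda>i. n - i) [0..<k] @ replicate (n - k) (1::nat))) v
   = card {t. t < k \<and> n - t = v} + (if v = 1 then n - k else 0)"
  by (simp only: mset_append count_union count_map_upt mset_replicate count_replicate_mset)

lemma count_Tt: "count (mset (replicate (n - k) (k + 1) @ map (\<lambda>i. k - i) [0..<k])) v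
   = (if v = k + 1 then n - k else 0) + card {t. t < k \<and> k - t = v}"
  by (simp only: mset_append count_union count_map_upt mset_replicate count_replicate_mset)

lemma card_sing_nat: assumes "t0 < k" "\<And>t t'. t < k \<Longrightarrow> t' < k \<Longrightarrow> f t = f t' \<Longrightarrow> t = t'"
  shows "card {t. t < k \<and> f t = (f t0 :: nat)} = 1"
proof -
  have "{t. t < k \<and> f t = f t0} = {t0}" using assms by auto
  thus ?thesis by simp
qed

lemma card_sum_ge1_eq:
  assumes fin: "finite J" and ge: "\<And>j. j \<in> J \<Longrightarrow> 1 \<le> (f j :: nat)" and le: "(\<Sum>j\<in>J. f j) \<le> card J"
  shows "\<And>j. j \<in> J \<Longrightarrow> f j = 1"
proof -
  have "(\<Sum>j\<in>J. f j) = (\<Sum>j\<in>J. 1 + (f j - 1))"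
    by (rule sum.cong[OF refl]) (metis ge le_add_diff_inverse)
  also have "\<dots> = (\<Sum>j\<in>J. 1) + (\<Sum>j\<in>J. f j - 1)" by (rule sum.distrib)
  also have "(\<Sum>j\<in>J. (1::nat)) = card J" by simp
  finally have "(\<Sum>j\<in>J. f j - 1) = 0" using le by simp
  hence "\<forall>j\<in>J. f j - 1 = 0" using fin by simp
  thus "\<And>j. j \<in> J \<Longrightarrow> f j = 1" using ge by (metis le_antisym diff_is_0_eq)
qed

lemma card1_The: assumes "card {x. P x} = 1" shows "P (THE x. P x)" "\<And>y. P y \<Longrightarrow> y = (THE x. P x)"
proof -
  obtain a where a: "{x. P x} = {a}" using assms card_1_singletonE by blast
  have Pa: "P a" using a by blast
  have u: "\<And>y. P y \<Longrightarrow> y = a" using a by blast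
  have T: "(THE x. P x) = a" by (rule the_equality[where P = P, OF Pa u])
  show "P (THE x. P x)" unfolding T by (rule Pa)
  show "\<And>y. P y \<Longrightarrow> y = (THE x. P x)" unfolding T by (rule u)
qed

context
  fixes n k :: nat and A :: "bit mat"
  assumes AH: "A \<in> H n k" and kn: "k \<le> n"
begin

lemma Acar: "A \<in> carrier_mat n n" using AH by (simp add: H_def GL2_def)
lemma Adim[simp]: "dim_row A = n" "dim_col A = n" using Acar by auto

lemma rsA: "row_sum A i = card {j. j < n \<and> A $$ (i,j) = 1}"
  unfolding row_sum_def Adim by (rule sum_if_card')

lemma csA: "col_sum A j = card {i. i < n \<and> A $$ (i,j) = 1}"
  unfolding col_sum_def Adim by (rule sum_if_card')

lemma mE: "mset (map (row_sum A) [0..<n]) = mset (map (\<lambda>i. n - i) [0..<k] @ replicate (n - k) (1::nat))"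
proof -
  have "eta A = map (\<lambda>i. n - i) [0..<k] @ replicate (n - k) 1" using AH by (simp add: H_def)
  hence "mset (eta A) = mset (map (\<lambda>i. n - i) [0..<k] @ replicate (n - k) (1::nat))" by simp
  thus ?thesis unfolding eta_def by simp
qed

lemma mT: "mset (map (col_sum A) [0..<n]) = mset (replicate (n - k) (k + 1) @ map (\<lambda>i. k - i) [0..<k])"
proof -
  have "theta A = replicate (n - k) (k + 1) @ map (\<lambda>i. k - i) [0..<k]" using AH by (simp add: H_def)
  hence "mset (theta A) = mset (replicate (n - k) (k + 1) @ map (\<lambda>i. k - i) [0..<k])" by simp
  thus ?thesis unfolding theta_def by simp
qed

lemma cntR: "card {i. i < n \<and> row_sum A i = v} = card {t. t < k \<and> n - t = v} + (if v = 1 then n - k else 0)"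
proof -
  have "card {i. i < n \<and> row_sum A i = v} = count (mset (map (row_sum A) [0..<n])) v"
    by (rule count_map_upt[symmetric])
  also have "\<dots> = count (mset (map (\<lambda>i. n - i) [0..<k] @ replicate (n - k) (1::nat))) v" by (simp only: mE)
  also have "\<dots> = card {t. t < k \<and> n - t = v} + (if v = 1 then n - k else 0)" by (rule count_Te)
  finally show ?thesis .
qed

lemma cntC: "card {j. j < n \<and> col_sum A j = v} = (if v = k + 1 then n - k else 0) + card {t. t < k \<and> k - t = v}"
proof -
  have "card {j. j < n \<and> col_sum A j = v} = count (mset (map (col_sum A) [0..<n])) v"
    by (rule count_map_upt[symmetric])
  also have "\<dots> = count (mset (replicate (n - k) (k + 1) @ map (\<lambda>i. k - i) [0..<k])) v" by (simp only: mT)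
  also have "\<dots> = (if v = k + 1 then n - k else 0) + card {t. t < k \<and> k - t = v}" by (rule count_Tt)
  finally show ?thesis .
qed

lemma R1: assumes t: "t < k" shows "card {i. i < n \<and> row_sum A i = n - t} = 1"
proof -
  have "card {t'. t' < k \<and> n - t' = n - t} = 1"
    by (rule card_sing_nat[OF t]) (use kn in auto)
  moreover have "(if n - t = 1 then n - k else 0) = 0" using t kn by auto
  ultimately show ?thesis using cntR by simp
qed

lemma R2: assumes i: "i < n" shows "row_sum A i = 1 \<or> (\<exists>t<k. row_sum A i = n - t)"
proof (rule ccontr)
  assume "\<not> ?thesis"
  hence "{t. t < k \<and> n - t = row_sum A i} = {}" "row_sum A i \<noteq> 1" by auto
  hence "card {t. t < k \<and> n - t = row_sum A i} = 0" "(if row_sum A i = 1 then n - k else 0) = 0"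
    by (simp only: card.empty, simp)
  hence "card {i'. i' < n \<and> row_sum A i' = row_sum A i} = 0" using cntR by simp
  moreover have "i \<in> {i'. i' < n \<and> row_sum A i' = row_sum A i}" using i by simp
  ultimately show False using card_0_eq[of "{i'. i' < n \<and> _}"] by auto
qed

lemma C1: assumes t: "t < k" shows "card {j. j < n \<and> col_sum A j = k - t} = 1"
proof -
  have "card {t'. t' < k \<and> k - t' = k - t} = 1"
    by (rule card_sing_nat[OF t]) auto
  moreover have "(if k - t = k + 1 then n - k else 0) = 0" by auto
  ultimately show ?thesis using cntC by simp
qed

lemma C2: assumes j: "j < n" shows "col_sum A j = k + 1 \<or> (\<exists>t<k. col_sum A j = k - t)"
proof (rule ccontr)
  assume "\<not> ?thesis"
  hence "{t. t < k \<and> k - t = col_sum A j} = {}" "col_sum A j \<noteq> k + 1" by auto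
  hence "card {t. t < k \<and> k - t = col_sum A j} = 0" "(if col_sum A j = k + 1 then n - k else 0) = 0"
    by (simp only: card.empty, simp)
  hence "card {j'. j' < n \<and> col_sum A j' = col_sum A j} = 0" using cntC by simp
  moreover have "j \<in> {j'. j' < n \<and> col_sum A j' = col_sum A j}" using j by simp
  ultimately show False using card_0_eq[of "{i'. i' < n \<and> _}"] by auto
qed


definition rr where "rr t = (THE i. i < n \<and> row_sum A i = n - t)"
definition cc where "cc t = (THE j. j < n \<and> col_sum A j = k - t)"
definition cL where "cL = map cc [0..<k]"
definition RR where "RR = rr ` {..<k}"
definition UU where "UU = {i. i < n \<and> i \<notin> RR}"
definition gg where "gg i = (THE j. j < n \<and> A $$ (i,j) = 1)"
definition JJ where "JJ = {j. j < n \<and> j \<notin> set cL}"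

lemma rr: assumes "t < k" shows "rr t < n" "row_sum A (rr t) = n - t"
  "\<And>i. i < n \<Longrightarrow> row_sum A i = n - t \<Longrightarrow> i = rr t"
  using card1_The[OF R1[OF assms]] unfolding rr_def by blast+

lemma cc: assumes "t < k" shows "cc t < n" "col_sum A (cc t) = k - t"
  "\<And>j. j < n \<Longrightarrow> col_sum A j = k - t \<Longrightarrow> j = cc t"
  using card1_The[OF C1[OF assms]] unfolding cc_def by blast+

lemma rr_inj: "t < k \<Longrightarrow> t' < k \<Longrightarrow> rr t = rr t' \<Longrightarrow> t = t'"
  using rr(2)[of t] rr(2)[of t'] kn by fastforce

lemma cc_inj: "t < k \<Longrightarrow> t' < k \<Longrightarrow> cc t = cc t' \<Longrightarrow> t = t'"
  using cc(2)[of t] cc(2)[of t'] by fastforce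

lemma cL_nth: "t < k \<Longrightarrow> cL ! t = cc t" unfolding cL_def by simp
lemma cL_len: "length cL = k" unfolding cL_def by simp

lemma cL_Inj: "cL \<in> Inj n k"
proof -
  have "distinct cL" unfolding cL_def distinct_map using cc_inj by (auto intro!: inj_onI)
  moreover have "set cL \<subseteq> {..<n}" unfolding cL_def using cc(1) by auto
  ultimately show ?thesis unfolding Inj_def using cL_len by simp
qed

lemma set_cL: "set cL = cc ` {..<k}" unfolding cL_def by auto

lemma out_col: assumes j: "j < n" "j \<notin> set cL" shows "col_sum A j = k + 1"
proof -
  have "\<not> (\<exists>t<k. col_sum A j = k - t)"
  proof
    assume "\<exists>t<k. col_sum A j = k - t"
    then obtain t where t: "t < k" "col_sum A j = k - t" by blast
    hence "j = cc t" using cc(3)[OF t(1) j(1)] by simp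
    thus False using j(2) t(1) set_cL by auto
  qed
  thus ?thesis using C2[OF j(1)] by blast
qed

lemma RR_sub: "RR \<subseteq> {..<n}" unfolding RR_def using rr(1) by auto
lemma card_RR: "card RR = k"
  unfolding RR_def by (subst card_image) (auto intro!: inj_onI dest: rr_inj)
lemma UU_eq: "UU = {..<n} - RR" unfolding UU_def by auto
lemma card_UU: "card UU = n - k"
  unfolding UU_eq using RR_sub card_RR by (simp add: card_Diff_subset finite_subset)
lemma JJ_eq: "JJ = {..<n} - set cL" unfolding JJ_def by auto
lemma card_JJ: "card JJ = n - k"
proof -
  have "card (set cL) = k" using cL_Inj distinct_card unfolding Inj_def by fastforce
  moreover have "set cL \<subseteq> {..<n}" using cL_Inj unfolding Inj_def by blast
  ultimately show ?thesis unfolding JJ_eq by (simp add: card_Diff_subset)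
qed

lemma unit_rowsum: assumes i: "i \<in> UU" shows "row_sum A i = 1"
proof -
  have i': "i < n" "i \<notin> RR" using i unfolding UU_def by auto
  have "\<not> (\<exists>t<k. row_sum A i = n - t)"
  proof
    assume "\<exists>t<k. row_sum A i = n - t"
    then obtain t where t: "t < k" "row_sum A i = n - t" by blast
    hence "i = rr t" using rr(3)[OF t(1) i'(1)] by simp
    thus False using i'(2) t(1) unfolding RR_def by auto
  qed
  thus ?thesis using R2[OF i'(1)] by blast
qed

lemma gg: assumes i: "i \<in> UU" shows "gg i < n" "A $$ (i, gg i) = 1"
  "\<And>j. j < n \<Longrightarrow> A $$ (i, j) = 1 \<Longrightarrow> j = gg i"
proof -
  have "card {j. j < n \<and> A $$ (i,j) = 1} = 1" using unit_rowsum[OF i] rsA by simp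
  note X = card1_The[OF this]
  show "gg i < n" "A $$ (i, gg i) = 1" "\<And>j. j < n \<Longrightarrow> A $$ (i, j) = 1 \<Longrightarrow> j = gg i"
    using X unfolding gg_def by blast+
qed

lemma colsplit: assumes j: "j < n"
  shows "{i. i < n \<and> A $$ (i,j) = 1} = {i\<in>RR. A $$ (i,j) = 1} \<union> {i\<in>UU. gg i = j}"
proof (intro Set.set_eqI iffI)
  fix i assume "i \<in> {i. i < n \<and> A $$ (i,j) = 1}"
  hence i: "i < n" "A $$ (i,j) = 1" by auto
  show "i \<in> {i\<in>RR. A $$ (i,j) = 1} \<union> {i\<in>UU. gg i = j}"
  proof (cases "i \<in> RR")
    case True thus ?thesis using i by blast
  next
    case False
    hence "i \<in> UU" using i unfolding UU_def by blast
    thus ?thesis using gg(3)[OF _ j i(2)] by blast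
  qed
next
  fix i assume "i \<in> {i\<in>RR. A $$ (i,j) = 1} \<union> {i\<in>UU. gg i = j}"
  thus "i \<in> {i. i < n \<and> A $$ (i,j) = 1}"
    using RR_sub gg(2) unfolding UU_def by auto
qed

lemma colsplit_card: assumes j: "j < n"
  shows "col_sum A j = card {i\<in>RR. A $$ (i,j) = 1} + card {i\<in>UU. gg i = j}"
proof -
  have "RR \<inter> UU = {}" unfolding UU_def by auto
  hence d: "{i\<in>RR. A $$ (i,j) = 1} \<inter> {i\<in>UU. gg i = j} = {}" by auto
  have f1: "finite {i\<in>RR. A $$ (i,j) = 1}" using RR_sub by (auto intro: finite_subset)
  have f2: "finite {i\<in>UU. gg i = j}" unfolding UU_def by auto
  show ?thesis unfolding csA colsplit[OF j] by (rule card_Un_disjoint[OF f1 f2 d])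
qed

lemma fib_sum: "(\<Sum>j\<in>JJ. card {i\<in>UU. gg i = j}) = card {i\<in>UU. gg i \<in> JJ}"
proof -
  have "card (\<Union>j\<in>JJ. {i\<in>UU. gg i = j}) = (\<Sum>j\<in>JJ. card {i\<in>UU. gg i = j})"
    by (rule card_UN_disjoint) (auto simp: JJ_def UU_def)
  moreover have "(\<Union>j\<in>JJ. {i\<in>UU. gg i = j}) = {i\<in>UU. gg i \<in> JJ}" by auto
  ultimately show ?thesis by simp
qed

lemma JJ_facts:
  shows F1: "\<And>i. i \<in> UU \<Longrightarrow> gg i \<in> JJ"
    and F2: "\<And>j. j \<in> JJ \<Longrightarrow> card {i\<in>UU. gg i = j} = 1"
    and F3: "\<And>j t. j \<in> JJ \<Longrightarrow> t < k \<Longrightarrow> A $$ (rr t, j) = 1"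
proof -
  have finJ: "finite JJ" unfolding JJ_def by simp
  have ge: "1 \<le> card {i\<in>UU. gg i = j}" if j: "j \<in> JJ" for j
  proof -
    have "col_sum A j = k + 1" using out_col j unfolding JJ_def by blast
    moreover have "card {i\<in>RR. A $$ (i,j) = 1} \<le> k"
      using card_RR card_mono[of RR "{i\<in>RR. A $$ (i,j) = 1}"] RR_sub by (auto intro: finite_subset)
    ultimately show ?thesis using colsplit_card[of j] j unfolding JJ_def by simp
  qed
  have le: "(\<Sum>j\<in>JJ. card {i\<in>UU. gg i = j}) \<le> card JJ"
  proof -
    have "card {i\<in>UU. gg i \<in> JJ} \<le> card UU" by (rule card_mono) (auto simp: UU_def)
    thus ?thesis using fib_sum card_UU card_JJ by simp
  qed
  show F2: "\<And>j. j \<in> JJ \<Longrightarrow> card {i\<in>UU. gg i = j} = 1"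
    by (rule card_sum_ge1_eq[OF finJ ge le])
  have "card {i\<in>UU. gg i \<in> JJ} = card UU"
  proof -
    have "(\<Sum>j\<in>JJ. card {i\<in>UU. gg i = j}) = (\<Sum>j\<in>JJ. 1)" using F2 by (intro sum.cong) auto
    thus ?thesis using fib_sum card_UU card_JJ by simp
  qed
  hence "{i\<in>UU. gg i \<in> JJ} = UU" by (intro card_subset_eq) (auto simp: UU_def)
  thus "\<And>i. i \<in> UU \<Longrightarrow> gg i \<in> JJ" by blast
  fix j t assume j: "j \<in> JJ" and t: "t < k"
  have "card {i\<in>RR. A $$ (i,j) = 1} = k"
  proof -
    have "col_sum A j = k + 1" using out_col j unfolding JJ_def by blast
    thus ?thesis using colsplit_card[of j] F2[OF j] j unfolding JJ_def by simp
  qed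
  hence "{i\<in>RR. A $$ (i,j) = 1} = RR"
    using card_RR RR_sub by (intro card_subset_eq) (auto intro: finite_subset)
  moreover have "rr t \<in> RR" using t unfolding RR_def by blast
  ultimately show "A $$ (rr t, j) = 1" by blast
qed


lemma stair_rows: assumes t: "t < k"
  shows "card {s. s < k \<and> A $$ (rr t, cL ! s) = 1} = k - t"
proof -
  let ?S = "{s. s < k \<and> A $$ (rr t, cL ! s) = 1}"
  have eq: "{j. j < n \<and> A $$ (rr t, j) = 1} = JJ \<union> (\<lambda>s. cL ! s) ` ?S"
  proof (intro Set.set_eqI iffI)
    fix j assume "j \<in> {j. j < n \<and> A $$ (rr t, j) = 1}"
    hence j: "j < n" "A $$ (rr t, j) = 1" by auto
    show "j \<in> JJ \<union> (\<lambda>s. cL ! s) ` ?S"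
    proof (cases "j \<in> set cL")
      case True
      then obtain s where "s < k" "j = cL ! s" using cL_len by (metis in_set_conv_nth)
      thus ?thesis using j by blast
    next
      case False thus ?thesis using j unfolding JJ_def by blast
    qed
  next
    fix j assume "j \<in> JJ \<union> (\<lambda>s. cL ! s) ` ?S"
    thus "j \<in> {j. j < n \<and> A $$ (rr t, j) = 1}"
      using F3[OF _ t] cc(1) cL_nth unfolding JJ_def by auto
  qed
  have d: "JJ \<inter> (\<lambda>s. cL ! s) ` ?S = {}" unfolding JJ_def using cL_len by auto
  have c2: "card ((\<lambda>s. cL ! s) ` ?S) = card ?S"
    by (rule card_image) (auto intro!: inj_onI simp: cL_nth dest: cc_inj)
  have "n - t = card JJ + card ((\<lambda>s. cL ! s) ` ?S)"
    using rr(2)[OF t] rsA eq card_Un_disjoint[OF _ _ d] by (simp add: JJ_def)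
  thus ?thesis using c2 card_JJ t kn by simp
qed

lemma stair_cols: assumes s: "s < k"
  shows "card {t. t < k \<and> A $$ (rr t, cL ! s) = 1} = k - s"
proof -
  let ?T = "{t. t < k \<and> A $$ (rr t, cL ! s) = 1}"
  have j: "cL ! s < n" using cc(1)[OF s] cL_nth[OF s] by simp
  have "{i\<in>UU. gg i = cL ! s} = {}"
  proof -
    have "cL ! s \<notin> JJ" unfolding JJ_def using s cL_len by auto
    have "\<forall>i\<in>UU. gg i \<noteq> cL ! s"
    proof
      fix i assume "i \<in> UU"
      hence "gg i \<in> JJ" by (rule F1)
      thus "gg i \<noteq> cL ! s" using \<open>cL ! s \<notin> JJ\<close> by metis
    qed
    thus ?thesis by blast
  qed
  hence "card {i\<in>UU. gg i = cL ! s} = 0" by (simp only: card.empty)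
  hence "col_sum A (cL ! s) = card {i\<in>RR. A $$ (i, cL ! s) = 1}" using colsplit_card[OF j]
    by (simp only: add_0_right)
  moreover have "{i\<in>RR. A $$ (i, cL ! s) = 1} = rr ` ?T" unfolding RR_def by auto
  moreover have "card (rr ` ?T) = card ?T"
    by (rule card_image) (auto intro!: inj_onI dest: rr_inj)
  ultimately show ?thesis using cc(2)[OF s] cL_nth[OF s] by simp
qed

lemma stair: "t < k \<Longrightarrow> s < k \<Longrightarrow> (A $$ (rr t, cL ! s) = 1) = (s + t < k)"
  by (rule staircase[where B = "\<lambda>t s. A $$ (rr t, cL ! s) = 1", OF stair_rows stair_cols])

definition sg where "sg i = (if i \<in> RR then cc (SOME t. t < k \<and> rr t = i) else if i < n then gg i else i)"

lemma sg_rr: "t < k \<Longrightarrow> sg (rr t) = cc t"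
proof -
  assume t: "t < k"
  have "rr t \<in> RR" using t unfolding RR_def by blast
  moreover have "(SOME t'. t' < k \<and> rr t' = rr t) = t"
    using t rr_inj by (intro some_equality) auto
  ultimately show ?thesis unfolding sg_def by simp
qed

lemma sg_UU: "i \<in> UU \<Longrightarrow> sg i = gg i" unfolding sg_def UU_def by auto

lemma sg_out: "\<not> i < n \<Longrightarrow> sg i = i" unfolding sg_def using RR_sub by auto

lemma in_RR_UU: "i < n \<Longrightarrow> (\<exists>t<k. i = rr t) \<or> i \<in> UU" unfolding UU_def RR_def by auto

lemma sg_perm: "sg permutes {..<n}"
proof (rule bij_imp_permutes)
  show "\<And>x. x \<notin> {..<n} \<Longrightarrow> sg x = x" using sg_out by simp
  have img: "sg ` {..<n} \<subseteq> {..<n}"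
  proof
    fix y assume "y \<in> sg ` {..<n}"
    then obtain i where i: "i < n" "y = sg i" by auto
    show "y \<in> {..<n}"
      using in_RR_UU[OF i(1)] i sg_rr cc(1) sg_UU F1 unfolding JJ_def by auto
  qed
  have inj: "inj_on sg {..<n}"
  proof (rule inj_onI)
    fix x y assume x: "x \<in> {..<n}" and y: "y \<in> {..<n}" and e: "sg x = sg y"
    have ccin: "t < k \<Longrightarrow> cc t \<in> set cL" for t using set_cL by auto
    have ggout: "i \<in> UU \<Longrightarrow> gg i \<notin> set cL" for i using F1 unfolding JJ_def by auto
    consider (a) t t' where "t < k" "x = rr t" "t' < k" "y = rr t'"
      | (b) t where "t < k" "x = rr t" "y \<in> UU"
      | (c) t where "x \<in> UU" "t < k" "y = rr t"
      | (d) "x \<in> UU" "y \<in> UU"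
    proof -
      have hx: "(\<exists>t<k. x = rr t) \<or> x \<in> UU" using in_RR_UU x by simp
      have hy: "(\<exists>t<k. y = rr t) \<or> y \<in> UU" using in_RR_UU y by simp
      show ?thesis
      proof (cases "x \<in> UU")
        case xU: True
        show ?thesis
        proof (cases "y \<in> UU")
          case True thus ?thesis using xU that(4) by blast
        next
          case False
          then obtain t' where "t' < k" "y = rr t'" using hy by blast
          thus ?thesis using xU that(3) by blast
        qed
      next
        case xR: False
        then obtain t where t: "t < k" "x = rr t" using hx by blast
        show ?thesis
        proof (cases "y \<in> UU")
          case True thus ?thesis using t that(2) by blast
        next
          case False
          then obtain t' where "t' < k" "y = rr t'" using hy by blast
          thus ?thesis using t that(1) by blast
        qed
      qed
    qed
    thus "x = y"
    proof cases
      case a thus ?thesis using e sg_rr cc_inj by metis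
    next
      case b thus ?thesis using e sg_rr sg_UU ccin ggout by metis
    next
      case c thus ?thesis using e sg_rr sg_UU ccin ggout by metis
    next
      case d
      hence "gg x = gg y" using e sg_UU by simp
      hence "x \<in> {i\<in>UU. gg i = gg y}" "y \<in> {i\<in>UU. gg i = gg y}" using d by auto
      moreover have "card {i\<in>UU. gg i = gg y} = 1" using F2 F1 d by blast
      ultimately show ?thesis by (metis card_1_singletonE singletonD)
    qed
  qed
  show "bij_betw sg {..<n} {..<n}"
    unfolding bij_betw_def using inj endo_inj_surj[OF _ img inj] by simp
qed

lemma A_Psi: "A = Psi n sg cL"
proof (rule eq_matI)
  show "dim_row A = dim_row (Psi n sg cL)" "dim_col A = dim_col (Psi n sg cL)" by simp_all
  fix i j assume "i < dim_row (Psi n sg cL)" "j < dim_col (Psi n sg cL)"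
  hence ij: "i < n" "j < n" by auto
  have PPeq: "(A $$ (i,j) = 1) = PP sg cL i j"
  proof -
    consider (a) t where "t < k" "i = rr t" | (b) "i \<in> UU" using in_RR_UU[OF ij(1)] by blast
    thus ?thesis
    proof cases
      case a
      have sgi: "sg i = cL ! t" using a sg_rr cL_nth by simp
      have PPi: "PP sg cL i j = (j \<notin> set cL \<or> (\<exists>a. a + t < k \<and> cL ! a = j))"
        by (rule PP_big[OF sg_perm cL_Inj a(1) sgi])
      show ?thesis
      proof (cases "j \<in> set cL")
        case False
        hence "A $$ (i,j) = 1" using F3[of j t] a ij unfolding JJ_def by blast
        thus ?thesis using PPi False by simp
      next
        case True
        then obtain s where s: "s < k" "j = cL ! s" using cL_len by (metis in_set_conv_nth)
        have "(\<exists>a. a + t < k \<and> cL ! a = j) = (s + t < k)"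
        proof
          assume "\<exists>a. a + t < k \<and> cL ! a = j"
          then obtain a' where a': "a' + t < k" "cL ! a' = j" by blast
          have "a' = s" using a' s cL_nth cc_inj by (metis add_lessD1)
          thus "s + t < k" using a' by simp
        qed (use s in blast)
        thus ?thesis using PPi True stair[OF a(1) s(1)] a s by simp
      qed
    next
      case b
      have sgi: "sg i = gg i" using sg_UU[OF b] .
      have nin: "sg i \<notin> set cL" using F1[OF b] sgi unfolding JJ_def by simp
      have "PP sg cL i j = (j = gg i)" using PP_unit[OF sg_perm cL_Inj nin] sgi by simp
      moreover have "(A $$ (i,j) = 1) = (j = gg i)" using gg[OF b] ij by blast
      ultimately show ?thesis by simp
    qed
  qed
  show "A $$ (i,j) = Psi n sg cL $$ (i,j)"
    using Psi_entry[OF ij] PPeq bit_cases01[of "A $$ (i,j)"] by auto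
qed

end



lemma H_surj: assumes "A \<in> H n k" "k \<le> n" shows "\<exists>s c. s \<in> Sym n \<and> c \<in> Inj n k \<and> A = Psi n s c"
  using sg_perm[OF assms] cL_Inj[OF assms] A_Psi[OF assms] unfolding Sym_def by blast

lemma sum_if_of_nat: "finite S \<Longrightarrow> (\<Sum>x\<in>S. if P x then 1 else 0) = (of_nat (card {x\<in>S. P x}) :: complex)"
proof -
  assume f: "finite S"
  have "(\<Sum>x\<in>S. if P x then 1 else 0) = (\<Sum>x\<in>S. of_nat (if P x then 1 else 0) :: complex)"
    by (rule sum.cong) auto
  also have "\<dots> = of_nat (\<Sum>x\<in>S. if P x then 1 else 0)" by (rule of_nat_sum[symmetric])
  also have "(\<Sum>x\<in>S. if P x then 1 else 0) = card {x\<in>S. P x}" by (rule sum_if_card[OF f])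
  finally show ?thesis .
qed

lemma finite_Sym: "finite (Sym n)" unfolding Sym_def by (rule finite_permutations) simp

lemma finite_Inj: "finite (Inj n k)"
proof -
  have "Inj n k \<subseteq> {xs. set xs \<subseteq> {..<n} \<and> length xs = k}" unfolding Inj_def by auto
  moreover have "finite {xs. set xs \<subseteq> {..<n} \<and> length xs = k}" by (rule finite_lists_length_eq) simp
  ultimately show ?thesis by (rule finite_subset)
qed

theorem mainTheorem5:
  fixes n k :: nat and p :: "nat \<Rightarrow> nat"
  assumes "k \<le> n" and "p \<in> Sym n"
  shows "chi_beta n k p = of_nat (card (centralizer n p) * falling (n - card (supp p)) k)
       \<and> chi_beta n k p = of_nat (falling (n - card (supp p)) k) * chi_conj n p"
proof -
  note kn = assms(1)
  have pp: "p permutes {..<n}" using assms(2) by (simp add: Sym_def)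
  define D where "D = Sym n \<times> Inj n k"
  define Q where "Q = (\<lambda>x. Psi n (fst x) (snd x))"
  have finD: "finite D" unfolding D_def using finite_Sym finite_Inj by simp
  have HD: "H n k = Q ` D"
  proof (intro Set.set_eqI iffI)
    fix A assume "A \<in> H n k"
    then obtain s c where "s \<in> Sym n" "c \<in> Inj n k" "A = Psi n s c" using H_surj kn by blast
    hence "(s, c) \<in> D" "A = Q (s, c)" unfolding D_def Q_def by simp_all
    thus "A \<in> Q ` D" by blast
  next
    fix A assume "A \<in> Q ` D"
    then obtain s c where "s \<in> Sym n" "c \<in> Inj n k" "A = Psi n s c" unfolding D_def Q_def by auto
    thus "A \<in> H n k" using Psi_in_H unfolding Sym_def by blast
  qed
  have injD: "inj_on Q D"
  proof (rule inj_onI)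
    fix x y assume xy: "x \<in> D" "y \<in> D" "Q x = Q y"
    obtain s c where sc: "x = (s, c)" by fastforce
    obtain s' c' where sc': "y = (s', c')" by fastforce
    have m: "s permutes {..<n}" "c \<in> Inj n k" "s' permutes {..<n}" "c' \<in> Inj n k"
      using xy sc sc' unfolding D_def Sym_def by auto
    have "Psi n s c = Psi n s' c'" using xy(3) sc sc' unfolding Q_def by simp
    hence "s = s' \<and> c = c'" by (rule Psi_inj[OF m(1) m(3) m(2) m(4)])
    thus "x = y" using sc sc' by simp
  qed
  define S1 where "S1 = {s\<in>Sym n. p \<circ> s \<circ> iv p = s}"
  define F where "F = {i. i < n \<and> p i = i}"
  define S2 where "S2 = {xs. length xs = k \<and> distinct xs \<and> set xs \<subseteq> F}"
  have fix_eq: "{x\<in>D. conj_act n p (Q x) = Q x} = S1 \<times> S2"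
  proof (intro Set.set_eqI iffI)
    fix x assume x: "x \<in> {x\<in>D. conj_act n p (Q x) = Q x}"
    obtain s c where sc: "x = (s, c)" by fastforce
    have s: "s \<in> Sym n" and c: "c \<in> Inj n k" using x sc unfolding D_def by auto
    have "Psi n (p \<circ> s \<circ> iv p) (map p c) = Psi n s c"
      using x sc conj_Psi[OF pp] unfolding Q_def by simp
    have m1: "p \<circ> s \<circ> iv p permutes {..<n}" using Sym_conj[OF assms(2) s] unfolding Sym_def by simp
    have m2: "s permutes {..<n}" using s unfolding Sym_def by simp
    have e: "p \<circ> s \<circ> iv p = s \<and> map p c = c"
      by (rule Psi_inj[OF m1 m2 Inj_map[OF assms(2) c] c]) fact
    have "s \<in> S1" using e s unfolding S1_def by simp
    moreover have "c \<in> S2"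
    proof -
      have "map p c = map id c" using e by simp
      hence "\<forall>y\<in>set c. p y = y" unfolding map_eq_conv by simp
      thus ?thesis using c unfolding S2_def F_def Inj_def by auto
    qed
    ultimately show "x \<in> S1 \<times> S2" using sc by simp
  next
    fix x assume x: "x \<in> S1 \<times> S2"
    obtain s c where sc: "x = (s, c)" by fastforce
    have s: "s \<in> Sym n" "p \<circ> s \<circ> iv p = s" using x sc unfolding S1_def by auto
    have c2: "length c = k" "distinct c" "set c \<subseteq> F" using x sc unfolding S2_def by auto
    have c: "c \<in> Inj n k" using c2 unfolding Inj_def F_def by auto
    have "map p c = c" using c2 unfolding F_def by (intro map_idI) auto
    hence "conj_act n p (Q x) = Q x" using sc conj_Psi[OF pp] s unfolding Q_def by simp
    thus "x \<in> {x\<in>D. conj_act n p (Q x) = Q x}" using s c sc unfolding D_def by simp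
  qed
  have cb: "chi_beta n k p = of_nat (card S1 * card S2)"
  proof -
    have finH: "finite (H n k)" using HD finD by simp
    have "chi_beta n k p = of_nat (card {A\<in>H n k. conj_act n p A = A})"
      unfolding chi_beta_def by (rule sum_if_of_nat[OF finH])
    also have "{A\<in>H n k. conj_act n p A = A} = Q ` {x\<in>D. conj_act n p (Q x) = Q x}"
      unfolding HD by auto
    also have "card \<dots> = card {x\<in>D. conj_act n p (Q x) = Q x}"
      by (rule card_image) (rule inj_on_subset[OF injD], auto)
    also have "\<dots> = card S1 * card S2" unfolding fix_eq by (rule card_cartesian_product)
    finally show ?thesis .
  qed
  have S1c: "S1 = centralizer n p"
  proof -
    have "(p \<circ> s \<circ> iv p = s) = (s \<circ> p = p \<circ> s)" for s
    proof
      assume h: "p \<circ> s \<circ> iv p = s"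
      show "s \<circ> p = p \<circ> s"
      proof
        fix x
        have "s (p x) = (p \<circ> s \<circ> iv p) (p x)" using h by simp
        also have "\<dots> = p (s (iv p (p x)))" by simp
        also have "iv p (p x) = x" using permutes_inverses(2)[OF pp] by simp
        finally show "(s \<circ> p) x = (p \<circ> s) x" by simp
      qed
    next
      assume h: "s \<circ> p = p \<circ> s"
      show "p \<circ> s \<circ> iv p = s"
      proof
        fix x
        have "p (s (iv p x)) = (p \<circ> s) (iv p x)" by simp
        also have "\<dots> = (s \<circ> p) (iv p x)" using h by simp
        also have "\<dots> = s (p (iv p x))" by simp
        also have "p (iv p x) = x" using permutes_inverses(1)[OF pp] by simp
        finally show "(p \<circ> s \<circ> iv p) x = s x" by simp
      qed
    qed
    note eqv = this
    show ?thesis unfolding S1_def centralizer_def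
    proof (intro Set.set_eqI iffI)
      fix s assume "s \<in> {s \<in> Sym n. p \<circ> s \<circ> iv p = s}"
      thus "s \<in> {s \<in> Sym n. s \<circ> p = p \<circ> s}" using eqv[of s] by simp
    next
      fix s assume "s \<in> {s \<in> Sym n. s \<circ> p = p \<circ> s}"
      thus "s \<in> {s \<in> Sym n. p \<circ> s \<circ> iv p = s}" using eqv[of s] by simp
    qed
  qed
  have cc: "chi_conj n p = of_nat (card S1)"
    unfolding chi_conj_def S1_def by (rule sum_if_of_nat[OF finite_Sym])
  have S2c: "card S2 = falling (n - card (supp p)) k"
  proof -
    have "card S2 = falling (card F) k" unfolding S2_def by (rule card_distinct_lists) (simp add: F_def)
    moreover have "card F = n - card (supp p)"
    proof -
      have sub: "supp p \<subseteq> {..<n}" unfolding supp_def using permutes_not_in[OF pp] by auto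
      have "F = {..<n} - supp p" unfolding F_def supp_def by auto
      thus ?thesis using sub by (simp add: card_Diff_subset finite_subset)
    qed
    ultimately show ?thesis by simp
  qed
  show ?thesis using cb cc S1c S2c by (simp add: mult.commute)
qed


end
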